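(* Suppose that for some $j\in\{2,\dots,n-1\}$ and $\ell>0$ the offline optimal solution takes the form of Structure 1 or Structure 2 on the interval $[j,j+\ell-1]\subseteq\{2,\dots,n-1\}$. Then the optimal dual variable satisfies $\lambda\le \frac{(B+G)\ell}{2}$.
   Context: Setting: $n\ge 3$, $B\ge 1$, $G\ge B$, labels $y_1,\dots,y_n\in[-G,G]$; $[a,b]=\{a,\dots,b\}$. Given $C_n>0$, the offline optimal $u_1,\dots,u_n$ is an optimal solution of: minimize $\frac12\sum_{t=1}^n(y_t-\tilde u_t)^2$ over $\tilde u\in\mathbb R^n$ subject to $\sum_{t=2}^{n}|\tilde u_t-\tilde u_{t-1}|\le C_n$ and $-B\le\tilde u_t\le B$ for all $t$. Let $\lambda\ge 0$ be an optimal dual variable for the total variation constraint and $\gamma_t^-,\gamma_t^+\ge0$ optimal dual variables for $-B\le\tilde u_t$ and $\tilde u_t\le B$. They satisfy the KKT conditions: there are $s_t\in[-1,1]$ ($t=1,\dots,n-1$) with $s_t=\mathrm{sign}(u_{t+1}-u_t)$ whenever $u_{t+1}\ne u_t$, and with $s_0=s_n=0$, such that $u_t-y_t=\lambda(s_t-s_{t-1})+\gamma_t^--\gamma_t^+$ for all $t\in[n]$, $\lambda(\sum_{t=2}^n|u_t-u_{t-1}|-C_n)=0$, $\gamma_t^-(u_t+B)=0$, $\gamma_t^+(u_t-B)=0$. Structure 1 on $[a,b]\subseteq\{2,\dots,n-1\}$: $u_j=u_a\in(-B,B)$ for all $j\in[a,b]$, $u_b>u_{b+1}$ and $u_a>u_{a-1}$.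 Structure 2 on $[a,b]\subseteq\{2,\dots,n-1\}$: $u_j=u_a\in(-B,B)$ for all $j\in[a,b]$, $u_b<u_{b+1}$ and $u_a<u_{a-1}$. *)

theory Defs
  imports Main "HOL.Real"
begin

text \<open>Sequences are functions nat => real; only indices 1..n matter.\<close>

definition tv_feasible :: "nat \<Rightarrow> real \<Rightarrow> real \<Rightarrow> (nat \<Rightarrow> real) \<Rightarrow> bool" where
  "tv_feasible n B C v \<longleftrightarrow>
     (\<Sum>t=2..n. \<bar>v t - v (t - 1)\<bar>) \<le> C \<and> (\<forall>t\<in>{1..n}. - B \<le> v t \<and> v t \<le> B)"

definition offline_optimal ::
  "nat \<Rightarrow> real \<Rightarrow> real \<Rightarrow> (nat \<Rightarrow> real) \<Rightarrow> (nat \<Rightarrow> real) \<Rightarrow> bool" where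
  "offline_optimal n B C y u \<longleftrightarrow> tv_feasible n B C u \<and>
     (\<forall>v. tv_feasible n B C v \<longrightarrow>
        (1/2) * (\<Sum>t=1..n. (y t - u t)\<^sup>2) \<le> (1/2) * (\<Sum>t=1..n. (y t - v t)\<^sup>2))"

definition structure1 :: "(nat \<Rightarrow> real) \<Rightarrow> real \<Rightarrow> nat \<Rightarrow> nat \<Rightarrow> bool" where
  "structure1 u B a b \<longleftrightarrow> (\<forall>j\<in>{a..b}. u j = u a) \<and> - B < u a \<and> u a < B \<and>
     u b > u (b + 1) \<and> u a > u (a - 1)"

definition structure2 :: "(nat \<Rightarrow> real) \<Rightarrow> real \<Rightarrow> nat \<Rightarrow> nat \<Rightarrow> bool" where
  "structure2 u B a b \<longleftrightarrow> (\<forall>j\<in>{a..b}. u j = u a) \<and> - B < u a \<and> u a < B \<and>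
     u b < u (b + 1) \<and> u a < u (a - 1)"

end

theory Submission
  imports Defs
begin

lemma telesc: "(\<Sum>t=a..a+k. (f t - f (t - 1))) = f (a+k) - f (a - 1)" for f :: "nat \<Rightarrow> real"
  by (induction k) auto

theorem lemma2:
  fixes n j l :: nat and B G C lam :: real
    and y u s gm gp :: "nat \<Rightarrow> real"
  assumes "n \<ge> 3" and "B \<ge> 1" and "G \<ge> B" and "C > 0"
    and "\<forall>t\<in>{1..n}. - G \<le> y t \<and> y t \<le> G"
    and "offline_optimal n B C y u"
    and "lam \<ge> 0"
    and "\<forall>t\<in>{1..n}. gm t \<ge> 0 \<and> gp t \<ge> 0"
    and "\<forall>t\<in>{1..n-1}. - 1 \<le> s t \<and> s t \<le> 1 \<and>
           (u (t + 1) \<noteq> u t \<longrightarrow> s t = sgn (u (t + 1) - u t))"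
    and "s 0 = 0" and "s n = 0"
    and "\<forall>t\<in>{1..n}. u t - y t = lam * (s t - s (t - 1)) + gm t - gp t"
    and "lam * ((\<Sum>t=2..n. \<bar>u t - u (t - 1)\<bar>) - C) = 0"
    and "\<forall>t\<in>{1..n}. gm t * (u t + B) = 0 \<and> gp t * (u t - B) = 0"
    and "j \<in> {2..n-1}" and "l > 0" and "{j..j+l-1} \<subseteq> {2..n-1}"
    and "structure1 u B j (j + l - 1) \<or> structure2 u B j (j + l - 1)"
  shows "lam \<le> (B + G) * real l / 2"
proof -
  define b where "b = j + l - 1"
  have jb: "j \<le> b" "b \<le> n - 1" "2 \<le> j" using assms(15,16,17) b_def by auto
  have ua: "\<forall>t\<in>{j..b}. u t = u j" "-B < u j" "u j < B"
    using assms(18) unfolding structure1_def structure2_def b_def by auto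
  have eq: "u t - y t = lam * (s t - s (t - 1))" if "t \<in> {j..b}" for t
  proof -
    have t: "t \<in> {1..n}" using that jb by auto
    have ut: "u t = u j" using ua(1) that by blast
    have "u t + B \<noteq> 0" "u t - B \<noteq> 0" using ua(2,3) ut by linarith+
    moreover have "gm t * (u t + B) = 0 \<and> gp t * (u t - B) = 0" using assms(14) t by blast
    ultimately have "gm t = 0" "gp t = 0" by simp_all
    moreover have "u t - y t = lam * (s t - s (t - 1)) + gm t - gp t" using assms(12) t by blast
    ultimately show ?thesis by simp
  qed
  have bd: "\<bar>u t - y t\<bar> \<le> B + G" if "t \<in> {j..b}" for t
  proof -
    have t: "t \<in> {1..n}" using that jb by auto
    have ut: "u t = u j" using ua(1) that by blast
    have "- G \<le> y t \<and> y t \<le> G" using assms(5) t by blast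
    thus ?thesis using ua(2,3) ut by (simp add: abs_le_iff)
  qed
  have "(\<Sum>t=j..b. u t - y t) = lam * (\<Sum>t=j..b. (s t - s (t - 1)))"
    using eq by (simp add: sum_distrib_left)
  also have "(\<Sum>t=j..b. (s t - s (t - 1))) = s b - s (j - 1)"
    using telesc[of s j "b - j"] jb by simp
  finally have S: "(\<Sum>t=j..b. u t - y t) = lam * (s b - s (j - 1))" .
  have "\<bar>\<Sum>t=j..b. u t - y t\<bar> \<le> (\<Sum>t=j..b. B + G)"
    by (rule order_trans[OF sum_abs sum_mono]) (use bd in auto)
  also have "\<dots> = real l * (B + G)" using b_def assms(16) by simp
  finally have A: "\<bar>lam * (s b - s (j - 1))\<bar> \<le> real l * (B + G)" using S by simp
  have sb1: "b \<in> {1..n-1}" "j - 1 \<in> {1..n-1}" using jb by auto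
  have ub: "u b = u j" using bspec[OF ua(1), of b] jb(1) by simp
  have jj: "j - 1 + 1 = j" using jb by auto
  have hb: "u (b+1) \<noteq> u b \<longrightarrow> s b = sgn (u (b+1) - u b)"
    using bspec[OF assms(9) sb1(1)] by blast
  have hj: "u j \<noteq> u (j - 1) \<longrightarrow> s (j - 1) = sgn (u j - u (j - 1))"
    using bspec[OF assms(9) sb1(2)] unfolding jj by blast
  have "\<bar>s b - s (j - 1)\<bar> = 2"
  proof (cases "structure1 u B j (j + l - 1)")
    case True
    hence "u b > u (b+1)" "u j > u (j - 1)" unfolding structure1_def b_def by auto
    moreover have "s b = sgn (u (b+1) - u b)" using hb calculation(1) by auto
    moreover have "s (j - 1) = sgn (u j - u (j - 1))" using hj calculation(2) by auto
    ultimately have "s b = -1" "s (j - 1) = 1" using ub by (simp_all add: sgn_if)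
    thus ?thesis by simp
  next
    case False
    hence "structure2 u B j (j + l - 1)" using assms(18) by auto
    hence "u b < u (b+1)" "u j < u (j - 1)" unfolding structure2_def b_def by auto
    moreover have "s b = sgn (u (b+1) - u b)" using hb calculation(1) by auto
    moreover have "s (j - 1) = sgn (u j - u (j - 1))" using hj calculation(2) by auto
    ultimately have "s b = 1" "s (j - 1) = -1" using ub by (simp_all add: sgn_if)
    thus ?thesis by simp
  qed
  hence "2 * lam \<le> real l * (B + G)" using A assms(7) by (simp add: abs_mult)
  thus ?thesis by (simp add: algebra_simps)
qed

end
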